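(* Let $\nu\in\mathcal P^{(n)}_0$ be minimal and let $i\in\{1,\dots,n-1\}$ satisfy $\sigma_\nu^{-1}(i)<\sigma_\nu^{-1}(i+1)$. Let $\nu^{(i)}$ be the unique minimal partition in $\mathcal P^{(n)}_0$ with $\sigma_{\nu^{(i)}}=s_i\circ\sigma_\nu$, where $s_i=(i,i+1)\in\mathfrak S_n$. Then for every $j=1,\dots,n-1$, $$\beta_j(\nu^{(i)})=r_{\alpha_i}(\beta_j(\nu))\quad\text{or}\quad\beta_j(\nu^{(i)})=r_{\alpha_i}(\beta_j(\nu))+\delta.$$
   Context: Fix $n\ge3$. Root lattice: let $Q=\bigoplus_{i=0}^{n-1}\mathbb Z\alpha_i$ be the root lattice of $\widehat{\mathfrak{sl}}_n$, with indices of $\alpha$ taken mod $n$ (so $\alpha_n=\alpha_0$). Its bilinear form is $(\alpha_i,\alpha_j)=a_{ij}$, where $a_{ii}=2$, $a_{i,i\pm1}=-1$ and $a_{ij}=0$ otherwise (indices mod $n$). Let $\delta=\alpha_0+\dots+\alpha_{n-1}$ and $r_{\alpha_i}(\beta)=\beta-(\beta,\alpha_i)\alpha_i$. Colorless partitions: a partition $\nu$ is $n$-colorless if for every residue $i$ mod $n$ the number of boxes $(x,y)$ ($\nu_x\ge y$) with $x-y\equiv i$ is the same. Let $\nu'$ be the conjugate partition. Let $\mathcal P^{(n)}_0$ be the set of $n$-colorless partitions $\nu$ with $\nu_1\le n$ and $\nu'_n<n$. Associated data for $\nu\in\mathcal P^{(n)}_0$: - The values $\nu'_m+1-m$, $m=1,\dots,n$,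 are pairwise distinct mod $n$. Define $\sigma_\nu\in\mathfrak S_n$ by $\sigma_\nu(n-m+1)=\overline{\nu'_m+1-m}$, where $\overline a\in\{1,\dots,n\}$ denotes the representative of $a$ mod $n$. - For $i=1,\dots,n-1$ put $\beta_i(\nu)=\alpha_{\nu'_{i+1}-i}+\alpha_{\nu'_{i+1}-i+1}+\dots+\alpha_{\nu'_i-i}$, a sum of $\nu'_i-\nu'_{i+1}+1$ consecutive simple roots with indices mod $n$. Minimality: $\nu$ is called minimal if $\nu'_i<\nu'_{i+1}+n-1$ for all $i=1,\dots,n-1$. For each $\sigma\in\mathfrak S_n$ there is a unique minimal $\nu\in\mathcal P^{(n)}_0$ with $\sigma_\nu=\sigma$. *)

theory Defs
  imports "HOL-Combinatorics.Transposition"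
begin

(* Partitions: weakly decreasing lists of positive naturals; nu_x = part nu x (1-indexed). *)
definition is_partition :: "nat list \<Rightarrow> bool" where
  "is_partition \<nu> \<longleftrightarrow> sorted_wrt (\<ge>) \<nu> \<and> (\<forall>p\<in>set \<nu>. 0 < p)"

definition part :: "nat list \<Rightarrow> nat \<Rightarrow> nat" where
  "part \<nu> x = (if 1 \<le> x \<and> x \<le> length \<nu> then \<nu> ! (x - 1) else 0)"

definition conj :: "nat list \<Rightarrow> nat \<Rightarrow> nat" where
  "conj \<nu> m = card {x. 1 \<le> x \<and> m \<le> part \<nu> x}"

definition boxes :: "nat list \<Rightarrow> (nat \<times> nat) set" where
  "boxes \<nu> = {(x, y). 1 \<le> x \<and> 1 \<le> y \<and> y \<le> part \<nu> x}"

definition color_count :: "nat \<Rightarrow> nat list \<Rightarrow> int \<Rightarrow> nat" where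
  "color_count n \<nu> i = card {(x, y) \<in> boxes \<nu>. (int x - int y) mod int n = i mod int n}"

definition colorless :: "nat \<Rightarrow> nat list \<Rightarrow> bool" where
  "colorless n \<nu> \<longleftrightarrow> (\<forall>i j. color_count n \<nu> i = color_count n \<nu> j)"

definition P0 :: "nat \<Rightarrow> nat list set" where
  "P0 n = {\<nu>. is_partition \<nu> \<and> colorless n \<nu> \<and> part \<nu> 1 \<le> n \<and> conj \<nu> n < n}"

definition rep :: "nat \<Rightarrow> int \<Rightarrow> nat" where
  "rep n a = nat ((a - 1) mod int n) + 1"

(* sigma_nu as a permutation of {1..n}, extended by the identity outside {1..n} *)
definition sigma :: "nat \<Rightarrow> nat list \<Rightarrow> nat \<Rightarrow> nat" where
  "sigma n \<nu> k = (if 1 \<le> k \<and> k \<le> n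
      then rep n (int (conj \<nu> (n + 1 - k)) + 1 - int (n + 1 - k)) else k)"

definition minimal :: "nat \<Rightarrow> nat list \<Rightarrow> bool" where
  "minimal n \<nu> \<longleftrightarrow> (\<forall>i\<in>{1..n-1}. conj \<nu> i < conj \<nu> (i + 1) + n - 1)"

(* Root lattice Q = Z^n: elements are coefficient vectors c :: nat => int,
   c k = coefficient of alpha_k for k < n, and 0 for k >= n. *)
type_synonym rootlat = "nat \<Rightarrow> int"

definition alpha :: "nat \<Rightarrow> int \<Rightarrow> rootlat" where
  "alpha n t = (\<lambda>k. if k = nat (t mod int n) then 1 else 0)"

definition delta :: "nat \<Rightarrow> rootlat" where
  "delta n = (\<lambda>k. if k < n then 1 else 0)"

definition cartan :: "nat \<Rightarrow> nat \<Rightarrow> nat \<Rightarrow> int" where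
  "cartan n k l = (if k = l then 2
     else if (k + 1) mod n = l \<or> (l + 1) mod n = k then -1 else 0)"

definition form :: "nat \<Rightarrow> rootlat \<Rightarrow> rootlat \<Rightarrow> int" where
  "form n b c = (\<Sum>k<n. \<Sum>l<n. b k * c l * cartan n k l)"

definition refl :: "nat \<Rightarrow> int \<Rightarrow> rootlat \<Rightarrow> rootlat" where
  "refl n i b = (\<lambda>k. b k - form n b (alpha n i) * alpha n i k)"

definition beta :: "nat \<Rightarrow> nat list \<Rightarrow> nat \<Rightarrow> rootlat" where
  "beta n \<nu> i = (\<lambda>k. \<Sum>t\<in>{int (conj \<nu> (i+1)) - int i .. int (conj \<nu> i) - int i}. alpha n t k)"

definition qadd :: "rootlat \<Rightarrow> rootlat \<Rightarrow> rootlat" where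
  "qadd b c = (\<lambda>k. b k + c k)"

end

theory Submission
  imports Defs
begin


lemma part_mono:
  assumes "is_partition \<nu>" "1 \<le> x" "x \<le> y"
  shows "part \<nu> y \<le> part \<nu> x"
proof (cases "y \<le> length \<nu>")
  case False then show ?thesis by (simp add: part_def)
next
  case True
  show ?thesis
  proof (cases "x = y")
    case True then show ?thesis by simp
  next
    case False
    then have "x - 1 < y - 1" "y - 1 < length \<nu>" using assms True by auto
    then have "\<nu> ! (y - 1) \<le> \<nu> ! (x - 1)"
      using assms(1) unfolding is_partition_def by (metis sorted_wrt_nth_less)
    then show ?thesis using True assms unfolding part_def by auto
  qed
qed

lemma down_closed:
  fixes S :: "nat set"
  assumes "S \<subseteq> {1..L}" "\<And>x y. x \<in> S \<Longrightarrow> 1 \<le> y \<Longrightarrow> y \<le> x \<Longrightarrow> y \<in> S"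
  shows "S = {1..card S}"
proof (cases "S = {}")
  case True then show ?thesis by simp
next
  case False
  have fin: "finite S" using assms(1) finite_subset by blast
  define M where "M = Max S"
  have "M \<in> S" using fin False M_def by simp
  have "S = {1..M}"
  proof
    show "S \<subseteq> {1..M}" using assms(1) fin M_def by auto
    show "{1..M} \<subseteq> S" using assms(2) \<open>M \<in> S\<close> by auto
  qed
  then show ?thesis by simp
qed

lemma conj_set:
  assumes "is_partition \<nu>" "1 \<le> m"
  shows "{x. 1 \<le> x \<and> m \<le> part \<nu> x} = {1..conj \<nu> m}"
proof -
  have "{x. 1 \<le> x \<and> m \<le> part \<nu> x} = {1..card {x. 1 \<le> x \<and> m \<le> part \<nu> x}}"
  proof (rule down_closed[where L="length \<nu>"])
    show "{x. 1 \<le> x \<and> m \<le> part \<nu> x} \<subseteq> {1..length \<nu>}"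
      using assms(2) by (auto simp: part_def split: if_splits)
  next
    fix x y assume "x \<in> {x. 1 \<le> x \<and> m \<le> part \<nu> x}" "1 \<le> y" "y \<le> x"
    then show "y \<in> {x. 1 \<le> x \<and> m \<le> part \<nu> x}"
      using part_mono[OF assms(1), of y x] by auto
  qed
  then show ?thesis unfolding conj_def by simp
qed

lemma conj_mono:
  assumes "is_partition \<nu>" "1 \<le> m"
  shows "conj \<nu> (m+1) \<le> conj \<nu> m"
proof -
  have s1: "{x. 1 \<le> x \<and> m+1 \<le> part \<nu> x} \<subseteq> {x. 1 \<le> x \<and> m \<le> part \<nu> x}" by auto
  have "{1..conj \<nu> (m+1)} \<subseteq> {1..conj \<nu> m}"
    using s1 unfolding conj_set[OF assms] conj_set[OF assms(1) le_add2[of 1 m]] .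
  show ?thesis
  proof (cases "conj \<nu> (m+1) = 0")
    case True then show ?thesis by simp
  next
    case False
    then have "conj \<nu> (m+1) \<in> {1..conj \<nu> (m+1)}" by simp
    with \<open>{1..conj \<nu> (m+1)} \<subseteq> {1..conj \<nu> m}\<close> have "conj \<nu> (m+1) \<in> {1..conj \<nu> m}" by blast
    then show ?thesis by simp
  qed
qed

lemma boxes_eq:
  assumes "is_partition \<nu>" "part \<nu> 1 \<le> n"
  shows "boxes \<nu> = {(x, y). 1 \<le> y \<and> y \<le> n \<and> x \<in> {1..conj \<nu> y}}"
proof -
  have "\<And>x y. 1 \<le> x \<Longrightarrow> 1 \<le> y \<Longrightarrow> y \<le> part \<nu> x \<Longrightarrow> y \<le> n"
    using part_mono[OF assms(1), of 1] assms(2) by (meson le_trans order_refl)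
  moreover have "\<And>x y. 1 \<le> y \<Longrightarrow> (1 \<le> x \<and> y \<le> part \<nu> x) = (x \<in> {1..conj \<nu> y})"
    using conj_set[OF assms(1)] by blast
  ultimately show ?thesis unfolding boxes_def by auto
qed

definition Ncnt :: "nat \<Rightarrow> nat \<Rightarrow> nat \<Rightarrow> int \<Rightarrow> nat" where
  "Ncnt n c y r = card {x \<in> {1..c}. (int x - int y) mod int n = r mod int n}"

lemma color_count_sum:
  assumes "is_partition \<nu>" "part \<nu> 1 \<le> n"
  shows "color_count n \<nu> r = (\<Sum>y\<in>{1..n}. Ncnt n (conj \<nu> y) y r)"
proof -
  let ?P = "\<lambda>x y. (int x - int y) mod int n = r mod int n"
  have "{(x, y) \<in> boxes \<nu>. ?P x y}
      = (\<lambda>(y,x). (x,y)) ` (SIGMA y:{1..n}. {x \<in> {1..conj \<nu> y}. ?P x y})"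
    unfolding boxes_eq[OF assms] by auto
  moreover have "inj_on (\<lambda>(y,x). (x,y)) (SIGMA y:{1..n}. {x \<in> {1..conj \<nu> y}. ?P x y})"
    by (auto simp: inj_on_def)
  ultimately have "card {(x, y) \<in> boxes \<nu>. ?P x y} = card (SIGMA y:{1..n}. {x \<in> {1..conj \<nu> y}. ?P x y})"
    by (simp add: card_image)
  also have "\<dots> = (\<Sum>y\<in>{1..n}. card {x \<in> {1..conj \<nu> y}. ?P x y})"
    by (rule card_SigmaI) auto
  finally show ?thesis unfolding color_count_def Ncnt_def by simp
qed

lemma mod_suc_cancel:
  fixes a b n :: int
  shows "((a + 1) mod n = (b + 1) mod n) = (a mod n = b mod n)"
  by (simp add: mod_eq_dvd_iff)

definition ind :: "bool \<Rightarrow> int" where "ind b = (if b then 1 else 0)"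

lemma Ncnt_diff:
  "int (Ncnt n c y r) - int (Ncnt n c y (r+1))
     = ind ((int c + 1 - int y) mod int n = (r+1) mod int n) - ind ((1 - int y) mod int n = (r+1) mod int n)"
proof (induction c)
  case 0
  then show ?case by (simp add: Ncnt_def)
next
  case (Suc c)
  have split: "\<And>P. {x \<in> {1..Suc c}. P x} = (if P (Suc c) then insert (Suc c) {x \<in> {1..c}. P x} else {x \<in> {1..c}. P x})"
    by (auto simp: le_Suc_eq)
  have card: "\<And>P. int (card {x \<in> {1..Suc c}. P x}) = int (card {x \<in> {1..c}. P x}) + ind (P (Suc c))"
    by (subst split) (auto simp: ind_def)
  have "int (Ncnt n (Suc c) y r) - int (Ncnt n (Suc c) y (r+1))
      = int (Ncnt n c y r) - int (Ncnt n c y (r+1))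
        + ind ((int (Suc c) - int y) mod int n = r mod int n)
        - ind ((int (Suc c) - int y) mod int n = (r+1) mod int n)"
    unfolding Ncnt_def card by simp
  moreover have "ind ((int (Suc c) - int y) mod int n = r mod int n)
      = ind ((int (Suc c) + 1 - int y) mod int n = (r+1) mod int n)"
    using mod_suc_cancel[of "int (Suc c) - int y" "int n" r] by (simp add: algebra_simps)
  ultimately show ?case using Suc.IH by (simp add: algebra_simps)
qed

lemma sum_ind_card: "(\<Sum>y\<in>A. ind (P y)) = int (card {y \<in> A. P y})" if "finite A"
proof -
  have "(\<Sum>y\<in>A. ind (P y)) = (\<Sum>y\<in>A. if P y then 1 else 0)" by (simp add: ind_def)
  also have "\<dots> = (\<Sum>y\<in>{y \<in> A. P y}. 1)"
    using that by (rule sum.inter_filter[symmetric])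
  finally show ?thesis by simp
qed

lemma small_dvd:
  fixes d :: int
  assumes "int n dvd d" "- int n < d" "d < int n"
  shows "d = 0"
proof (rule ccontr)
  assume "d \<noteq> 0"
  then have "\<bar>int n\<bar> \<le> \<bar>d\<bar>" using dvd_imp_le_int[OF _ assms(1)] by simp
  then show False using assms by linarith
qed

lemma base_card:
  assumes "n > 0"
  shows "card {y \<in> {1..n}. (1 - int y) mod int n = s mod int n} = 1"
proof -
  define y0 where "y0 = nat ((- s) mod int n) + 1"
  have m: "0 \<le> (- s) mod int n" "(- s) mod int n < int n" using assms by auto
  have y0r: "y0 \<in> {1..n}" using m unfolding y0_def by auto
  have y0c: "int y0 = (- s) mod int n + 1" using m unfolding y0_def by simp
  have "{y \<in> {1..n}. (1 - int y) mod int n = s mod int n} = {y0}"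
  proof safe
    fix y assume y: "y \<in> {1..n}" "(1 - int y) mod int n = s mod int n"
    then have d1: "int n dvd (1 - int y - s)" by (simp add: mod_eq_dvd_iff)
    have "((- s) mod int n) mod int n = (- s) mod int n" by simp
    then have "int n dvd ((- s) mod int n - (- s))" by (simp only: mod_eq_dvd_iff)
    then have d2: "int n dvd ((- s) mod int n + s)" by simp
    have e: "int y0 - int y = ((- s) mod int n + s) + (1 - int y - s)" unfolding y0c by simp
    have "int n dvd (((- s) mod int n + s) + (1 - int y - s))" by (rule dvd_add[OF d2 d1])
    then have "int n dvd (int y0 - int y)" by (simp only: e)
    moreover have "- int n < int y0 - int y" "int y0 - int y < int n" using y y0r by auto
    ultimately have "int y0 - int y = 0" using small_dvd by blast
    then show "y = y0" by simp
  next
    show "y0 \<in> {1..n}" using y0r by simp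
    have "1 - int y0 = - ((- s) mod int n)" unfolding y0c by simp
    moreover have "(- ((- s) mod int n)) mod int n = (- (- s)) mod int n" by (rule mod_minus_eq)
    ultimately show "(1 - int y0) mod int n = s mod int n" by simp
  qed
  then show ?thesis by simp
qed

lemma colorless_card:
  assumes "\<nu> \<in> P0 n" "n > 0"
  shows "card {y \<in> {1..n}. (int (conj \<nu> y) + 1 - int y) mod int n = s mod int n} = 1"
proof -
  have part: "is_partition \<nu>" "part \<nu> 1 \<le> n" "colorless n \<nu>" using assms unfolding P0_def by auto
  have "color_count n \<nu> (s - 1) = color_count n \<nu> s" using part(3) unfolding colorless_def by blast
  then have eq: "(\<Sum>y\<in>{1..n}. Ncnt n (conj \<nu> y) y (s-1)) = (\<Sum>y\<in>{1..n}. Ncnt n (conj \<nu> y) y s)"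
    unfolding color_count_sum[OF part(1,2)] .
  have eqi: "(\<Sum>y\<in>{1..n}. int (Ncnt n (conj \<nu> y) y (s-1))) = (\<Sum>y\<in>{1..n}. int (Ncnt n (conj \<nu> y) y s))"
    using arg_cong[OF eq, of int] unfolding of_nat_sum .
  have nd: "\<And>y. int (Ncnt n (conj \<nu> y) y (s-1)) - int (Ncnt n (conj \<nu> y) y s)
      = ind ((int (conj \<nu> y) + 1 - int y) mod int n = s mod int n) - ind ((1 - int y) mod int n = s mod int n)"
    using Ncnt_diff[of n _ _ "s-1"] by simp
  have "(\<Sum>y\<in>{1..n}. int (Ncnt n (conj \<nu> y) y (s-1)) - int (Ncnt n (conj \<nu> y) y s)) = 0"
    using eqi by (simp only: sum_subtractf)
  then have "(\<Sum>y\<in>{1..n}. ind ((int (conj \<nu> y) + 1 - int y) mod int n = s mod int n)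
                  - ind ((1 - int y) mod int n = s mod int n)) = 0"
    by (simp only: nd)
  then have "(\<Sum>y\<in>{1..n}. ind ((int (conj \<nu> y) + 1 - int y) mod int n = s mod int n))
           = (\<Sum>y\<in>{1..n}. ind ((1 - int y) mod int n = s mod int n))"
    by (simp add: sum_subtractf)
  then show ?thesis using base_card[OF assms(2), of s] by (simp add: sum_ind_card)
qed

lemma colorless_inj:
  assumes "\<nu> \<in> P0 n" "n > 0" "y \<in> {1..n}" "y' \<in> {1..n}"
    and "(int (conj \<nu> y) + 1 - int y) mod int n = (int (conj \<nu> y') + 1 - int y') mod int n"
  shows "y = y'"
proof -
  let ?S = "{y \<in> {1..n}. (int (conj \<nu> y) + 1 - int y) mod int n = (int (conj \<nu> y') + 1 - int y') mod int n}"
  have "card ?S = 1" by (rule colorless_card[OF assms(1,2)])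
  then obtain z where "?S = {z}" by (rule card_1_singletonE)
  moreover have "y \<in> ?S" "y' \<in> ?S" using assms by auto
  ultimately show ?thesis by auto
qed



definition Gf :: "nat \<Rightarrow> int \<Rightarrow> nat \<Rightarrow> int" where
  "Gf n x k = (if k < n then (x - int k - 1) div int n else 0)"

lemma div_step:
  fixes y :: int assumes "n > 0"
  shows "(y + 1) div n - y div n = (if (y + 1) mod n = 0 then 1 else 0)"
proof -
  have e1: "y = n * (y div n) + y mod n" by simp
  have r: "0 \<le> y mod n" "y mod n < n" using assms by auto
  show ?thesis
  proof (cases "y mod n = n - 1")
    case True
    then have "y + 1 = n * (y div n) + n" using e1 by linarith
    then have "y + 1 = n * (y div n + 1)" by (simp add: algebra_simps)
    then show ?thesis using assms by simp
  next
    case False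
    then have "y mod n + 1 < n" using r by auto
    have eq: "y + 1 = (y mod n + 1) + n * (y div n)" using e1 by linarith
    have "(y + 1) div n = ((y mod n + 1) + n * (y div n)) div n" using eq by simp
    also have "\<dots> = y div n + (y mod n + 1) div n" using div_mult_self2[of n "y mod n + 1" "y div n"] assms by linarith
    finally have "(y + 1) div n = (y mod n + 1) div n + y div n" by simp
    moreover have "(y mod n + 1) div n = 0" using r \<open>y mod n + 1 < n\<close> by (simp add: div_pos_pos_trivial)
    moreover have "(y + 1) mod n = y mod n + 1"
    proof -
      have "(y + 1) mod n = ((y mod n + 1) + n * (y div n)) mod n" using eq by simp
      also have "\<dots> = (y mod n + 1) mod n" by (rule mod_mult_self2)
      finally show ?thesis using r \<open>y mod n + 1 < n\<close> by simp
    qed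
    ultimately have "(y + 1) div n = y div n" "(y+1) mod n = y mod n + 1" by auto
    then show ?thesis using r by simp
  qed
qed

lemma G_step:
  assumes "k < n"
  shows "Gf n (x+1) k - Gf n x k = (if int k = x mod int n then 1 else 0)"
proof -
  have n: "int n > 0" using assms by simp
  have "Gf n (x+1) k - Gf n x k = ((x - int k - 1) + 1) div int n - (x - int k - 1) div int n"
    using assms by (simp add: Gf_def algebra_simps)
  also have "\<dots> = (if (x - int k) mod int n = 0 then 1 else 0)"
    using div_step[OF n, of "x - int k - 1"] by simp
  also have "(x - int k) mod int n = 0 \<longleftrightarrow> int k = x mod int n"
  proof -
    have "(x - int k) mod int n = 0 \<longleftrightarrow> x mod int n = int k mod int n"
      by (simp add: mod_eq_dvd_iff dvd_eq_mod_eq_0[symmetric])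
    also have "int k mod int n = int k" using assms by simp
    finally show ?thesis by auto
  qed
  finally show ?thesis by simp
qed

lemma alpha_lt: "k < n \<Longrightarrow> alpha n t k = (if int k = t mod int n then 1 else 0)"
  unfolding alpha_def by auto

lemma alpha_ge: "n > 0 \<Longrightarrow> n \<le> k \<Longrightarrow> alpha n t k = 0"
  unfolding alpha_def
proof -
  assume "n > 0" "n \<le> k"
  then have "nat (t mod int n) < n" by (simp add: nat_less_iff)
  then show "(if k = nat (t mod int n) then 1 else 0) = 0" using \<open>n \<le> k\<close> by auto
qed

lemma sum_alpha_G:
  assumes "n > 0" and "p \<le> q"
  shows "(\<Sum>t\<in>{p..q-1}. alpha n t k) = Gf n q k - Gf n p k"
  using assms(2)
proof (induction q rule: int_ge_induct)
  case base
  then show ?case by simp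
next
  case (step q)
  have "{p..q + 1 - 1} = insert q {p..q-1}" using step.hyps by auto
  then have "(\<Sum>t\<in>{p..q + 1 - 1}. alpha n t k) = alpha n q k + (\<Sum>t\<in>{p..q-1}. alpha n t k)"
    by simp
  also have "\<dots> = alpha n q k + (Gf n q k - Gf n p k)" using step.IH by simp
  also have "\<dots> = Gf n (q+1) k - Gf n p k"
  proof (cases "k < n")
    case True
    then show ?thesis using G_step[OF True, of q] alpha_lt[OF True, of q] by simp
  next
    case False
    then show ?thesis using alpha_ge[OF assms(1)] by (simp add: Gf_def)
  qed
  finally show ?case .
qed

lemma G_shift: "n > 0 \<Longrightarrow> Gf n (x + u * int n) k = Gf n x k + (if k < n then u else 0)"
proof -
  assume n: "n > 0"
  have e: "x + u * int n - int k - 1 = (x - int k - 1) + u * int n" by simp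
  have "(x + u * int n - int k - 1) div int n = u + (x - int k - 1) div int n"
    unfolding e using n div_mult_self1[of "int n" "x - int k - 1" u] by simp
  then show ?thesis unfolding Gf_def by simp
qed

lemma alpha_i: "i < n \<Longrightarrow> alpha n (int i) l = (if l = i then 1 else 0)"
  unfolding alpha_def by auto

lemma form_alpha:
  assumes "i < n"
  shows "form n b (alpha n (int i)) = (\<Sum>k<n. b k * cartan n k i)"
proof -
  have "\<And>k. (\<Sum>l<n. b k * alpha n (int i) l * cartan n k l) = b k * cartan n k i"
  proof -
    fix k
    have "(\<Sum>l<n. b k * alpha n (int i) l * cartan n k l)
        = (\<Sum>l<n. if l = i then b k * cartan n k l else 0)"
      by (rule sum.cong) (auto simp: alpha_i[OF assms])
    also have "\<dots> = b k * cartan n k i" using assms by simp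
    finally show "(\<Sum>l<n. b k * alpha n (int i) l * cartan n k l) = b k * cartan n k i" .
  qed
  then show ?thesis unfolding form_def by simp
qed

definition Hf :: "nat \<Rightarrow> nat \<Rightarrow> int \<Rightarrow> int" where
  "Hf n i x = (\<Sum>k<n. Gf n x k * cartan n k i)"

lemma form_G:
  assumes "i < n"
  shows "form n (\<lambda>k. Gf n q k - Gf n p k) (alpha n (int i)) = Hf n i q - Hf n i p"
  unfolding form_alpha[OF assms] Hf_def
  by (simp add: left_diff_distrib sum_subtractf)

lemma H_step:
  assumes "n > 0"
  shows "Hf n i (x+1) - Hf n i x = cartan n (nat (x mod int n)) i"
proof -
  have "Hf n i (x+1) - Hf n i x = (\<Sum>k<n. (Gf n (x+1) k - Gf n x k) * cartan n k i)"
    unfolding Hf_def by (simp add: left_diff_distrib sum_subtractf)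
  also have "\<dots> = (\<Sum>k<n. if k = nat (x mod int n) then cartan n k i else 0)"
    by (rule sum.cong) (auto simp: G_step)
  also have "\<dots> = cartan n (nat (x mod int n)) i"
    using assms by (simp add: nat_less_iff)
  finally show ?thesis .
qed

definition ee :: "nat \<Rightarrow> nat \<Rightarrow> nat \<Rightarrow> int" where
  "ee n i z = (if z = i then 1 else if z = (i+1) mod n then -1 else 0)"

definition Ef :: "nat \<Rightarrow> nat \<Rightarrow> int \<Rightarrow> int" where
  "Ef n i x = ee n i (nat (x mod int n))"

lemma suc_mod: "(R::nat) < n \<Longrightarrow> (R+1) mod n = (if R + 1 = n then 0 else R + 1)"
  by (cases "R + 1 = n") simp_all

lemma cartan_ee:
  assumes "n \<ge> 3" "R < n" "i < n"
  shows "cartan n R i = ee n i R - ee n i ((R+1) mod n)"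
proof -
  have hi: "(i+1) mod n = (if i+1 = n then 0 else i+1)" using assms(3) by (rule suc_mod)
  have hR: "(R+1) mod n = (if R+1 = n then 0 else R+1)" using assms(2) by (rule suc_mod)
  show ?thesis
    apply (simp only: cartan_def ee_def hi hR)
    using assms by auto
qed

lemma nat_mod_suc:
  assumes "n > 0"
  shows "nat ((x + 1) mod int n) = (nat (x mod int n) + 1) mod n"
proof -
  have "(x + 1) mod int n = (x mod int n + 1) mod int n" by (simp add: mod_add_left_eq)
  moreover have "x mod int n \<ge> 0" using assms by simp
  ultimately show ?thesis using assms by (simp add: nat_mod_distrib nat_add_distrib)
qed

lemma cartan_E:
  assumes "n \<ge> 3" "i < n"
  shows "cartan n (nat (x mod int n)) i = Ef n i x - Ef n i (x+1)"
proof -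
  have "nat (x mod int n) < n" using assms by (simp add: nat_less_iff)
  then show ?thesis unfolding Ef_def using cartan_ee[OF assms(1) _ assms(2)] nat_mod_suc[of n x] assms
    by simp
qed

lemma int_const:
  fixes f :: "int \<Rightarrow> int"
  assumes "\<And>x. f (x+1) = f x"
  shows "f x = f 0"
proof (induction x rule: int_induct[where k=0])
  case base then show ?case by simp
next
  case (step1 i) then show ?case using assms[of i] by simp
next
  case (step2 i) then show ?case using assms[of "i-1"] by simp
qed

lemma HE_const:
  assumes "n \<ge> 3" "i < n"
  shows "Hf n i x + Ef n i x = Hf n i 0 + Ef n i 0"
proof -
  have "\<And>x. Hf n i (x+1) + Ef n i (x+1) = Hf n i x + Ef n i x"
  proof -
    fix x
    have n0: "n > 0" using assms by simp
    show "Hf n i (x+1) + Ef n i (x+1) = Hf n i x + Ef n i x"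
      using H_step[OF n0, of i x] cartan_E[OF assms, of x] by linarith
  qed
  then show ?thesis using int_const[of "\<lambda>x. Hf n i x + Ef n i x"] by blast
qed

lemma E_cases: "Ef n i x = 1 \<or> Ef n i x = -1 \<or> Ef n i x = 0"
  unfolding Ef_def ee_def by auto

lemma G_E:
  assumes "n \<ge> 3" "i < n" "k < n"
  shows "Gf n (x + Ef n i x) k = Gf n x k + Ef n i x * (if k = i then 1 else 0)"
proof -
  have n0: "n > 0" using assms by simp
  have xm: "0 \<le> x mod int n" "x mod int n < int n" using n0 by auto
  consider "Ef n i x = 1" | "Ef n i x = -1" | "Ef n i x = 0" using E_cases by blast
  then show ?thesis
  proof cases
    case 1
    then have "nat (x mod int n) = i" unfolding Ef_def ee_def by (auto split: if_splits)
    then have "x mod int n = int i" using xm by auto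
    then show ?thesis using G_step[OF assms(3), of x] 1 by auto
  next
    case 2
    then have "nat (x mod int n) = (i+1) mod n" unfolding Ef_def ee_def by (auto split: if_splits)
    then have "x mod int n = (int i + 1) mod int n"
    proof -
      assume h: "nat (x mod int n) = (i+1) mod n"
      have "x mod int n = int (nat (x mod int n))" using xm by simp
      also have "\<dots> = int ((i+1) mod n)" using h by simp
      also have "\<dots> = (int i + 1) mod int n" by (simp add: of_nat_mod add.commute)
      finally show ?thesis .
    qed
    then have "int n dvd (x - (int i + 1))" by (simp only: mod_eq_dvd_iff)
    then have "(x - 1) mod int n = int i mod int n" by (simp add: mod_eq_dvd_iff algebra_simps)
    also have "\<dots> = int i" using assms by simp
    finally have "(x - 1) mod int n = int i" .
    then show ?thesis using G_step[OF assms(3), of "x - 1"] 2 by auto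
  next
    case 3
    then show ?thesis by simp
  qed
qed

definition sh :: "nat \<Rightarrow> nat \<Rightarrow> int \<Rightarrow> int" where
  "sh n i x = x + Ef n i x"

lemma refl_G:
  assumes "n \<ge> 3" "i < n"
  shows "refl n (int i) (\<lambda>k. Gf n q k - Gf n p k) = (\<lambda>k. Gf n (sh n i q) k - Gf n (sh n i p) k)"
proof
  fix k
  show "refl n (int i) (\<lambda>k. Gf n q k - Gf n p k) k = Gf n (sh n i q) k - Gf n (sh n i p) k"
  proof (cases "k < n")
    case True
    have "refl n (int i) (\<lambda>k. Gf n q k - Gf n p k) k
       = Gf n q k - Gf n p k - (Hf n i q - Hf n i p) * (if k = i then 1 else 0)"
      unfolding refl_def form_G[OF assms(2)] alpha_i[OF assms(2)] by simp
    also have "Hf n i q - Hf n i p = Ef n i p - Ef n i q"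
      using HE_const[OF assms, of q] HE_const[OF assms, of p] by simp
    finally show ?thesis unfolding sh_def using G_E[OF assms True] by (simp add: algebra_simps)
  next
    case False
    then show ?thesis unfolding refl_def Gf_def alpha_i[OF assms(2)] using assms by auto
  qed
qed



lemma rep_eq_mod:
  assumes "n > 0"
  shows "(rep n x = rep n y) = (x mod int n = y mod int n)"
proof -
  have a: "0 \<le> (x - 1) mod int n" "0 \<le> (y - 1) mod int n" using assms by auto
  have "(rep n x = rep n y) = ((x - 1) mod int n = (y - 1) mod int n)"
    unfolding rep_def using a eq_nat_nat_iff[OF a] by simp
  also have "\<dots> = (x mod int n = y mod int n)" by (simp add: mod_eq_dvd_iff)
  finally show ?thesis .
qed

lemma rep_int:
  assumes "1 \<le> v" "v \<le> n"
  shows "rep n (int v) = v"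
proof -
  have "(int v - 1) mod int n = int v - 1" using assms by simp
  then show ?thesis unfolding rep_def using assms by simp
qed

lemma Ef_one:
  assumes "n > 0" "i < n"
  shows "(Ef n i x = 1) = (x mod int n = int i)"
proof -
  have xm: "0 \<le> x mod int n" using assms by simp
  show ?thesis unfolding Ef_def ee_def using xm by auto
qed

lemma Ef_mone:
  assumes "n \<ge> 2" "i < n"
  shows "(Ef n i x = -1) = (x mod int n = (int i + 1) mod int n)"
proof -
  have xm: "0 \<le> x mod int n" using assms by simp
  have ne: "(i+1) mod n \<noteq> i" using assms by (cases "i + 1 = n") auto
  have c: "int ((i+1) mod n) = (int i + 1) mod int n" by (simp add: of_nat_mod add.commute)
  have "(Ef n i x = -1) = (nat (x mod int n) = (i+1) mod n)"
    unfolding Ef_def ee_def using ne by auto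
  also have "\<dots> = (x mod int n = int ((i+1) mod n))" using xm by auto
  finally show ?thesis using c by simp
qed

lemma rep_sh:
  assumes "n \<ge> 3" "1 \<le> i" "i < n"
  shows "rep n (sh n i x) = transpose i (i + 1) (rep n x)"
proof -
  have n0: "n > 0" using assms by simp
  have n2: "n \<ge> 2" using assms by simp
  have ri: "rep n (int i) = i" using rep_int assms by simp
  have ri1: "rep n (int i + 1) = i + 1" using rep_int[of "i+1" n] assms by (simp add: add.commute)
  consider "Ef n i x = 1" | "Ef n i x = -1" | "Ef n i x = 0" using E_cases by blast
  then show ?thesis
  proof cases
    case 1
    then have xm: "x mod int n = int i" using Ef_one[OF n0 assms(3)] by simp
    then have "rep n x = i" using ri rep_eq_mod[OF n0, of x "int i"] assms by simp
    moreover have "(x + 1) mod int n = (int i + 1) mod int n" using xm by (metis mod_add_left_eq)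
    then have "rep n (x + 1) = i + 1" using ri1 rep_eq_mod[OF n0, of "x+1" "int i + 1"] by simp
    ultimately show ?thesis unfolding sh_def using 1 by simp
  next
    case 2
    then have xm: "x mod int n = (int i + 1) mod int n" using Ef_mone[OF n2 assms(3)] by simp
    then have "rep n x = i + 1" using ri1 rep_eq_mod[OF n0, of x "int i + 1"] by simp
    moreover have "(x - 1) mod int n = int i mod int n" using xm by (simp add: mod_eq_dvd_iff algebra_simps)
    then have "rep n (x - 1) = i" using ri rep_eq_mod[OF n0, of "x - 1" "int i"] by simp
    ultimately show ?thesis unfolding sh_def using 2 by simp
  next
    case 3
    then have "x mod int n \<noteq> int i" "x mod int n \<noteq> (int i + 1) mod int n"
      using Ef_one[OF n0 assms(3), of x] Ef_mone[OF n2 assms(3), of x] 3 by auto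
    moreover have "int i mod int n = int i" using assms by simp
    ultimately have "rep n x \<noteq> rep n (int i)" "rep n x \<noteq> rep n (int i + 1)"
      unfolding rep_eq_mod[OF n0] by simp_all
    then have "rep n x \<noteq> i" "rep n x \<noteq> i + 1" unfolding ri ri1 .
    then show ?thesis unfolding sh_def using 3 by simp
  qed
qed

definition aa :: "nat list \<Rightarrow> nat \<Rightarrow> int" where
  "aa \<nu> m = int (conj \<nu> m) + 1 - int m"

lemma sigma_val: "k \<in> {1..n} \<Longrightarrow> sigma n \<nu> k = rep n (aa \<nu> (n + 1 - k))"
  unfolding sigma_def aa_def by auto

lemma rep_range: "n > 0 \<Longrightarrow> rep n x \<in> {1..n}"
proof -
  assume n: "n > 0"
  have "(x - 1) mod int n < int n" "0 \<le> (x - 1) mod int n" using n by auto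
  then show ?thesis unfolding rep_def by auto
qed

lemma sigma_inj:
  assumes "\<nu> \<in> P0 n" "n > 0" "k \<in> {1..n}" "k' \<in> {1..n}" "sigma n \<nu> k = sigma n \<nu> k'"
  shows "k = k'"
proof -
  have "aa \<nu> (n + 1 - k) mod int n = aa \<nu> (n + 1 - k') mod int n"
    using assms(5) unfolding sigma_val[OF assms(3)] sigma_val[OF assms(4)] rep_eq_mod[OF assms(2)] .
  then have r: "(int (conj \<nu> (n+1-k)) + 1 - int (n+1-k)) mod int n = (int (conj \<nu> (n+1-k')) + 1 - int (n+1-k')) mod int n"
    unfolding aa_def .
  have kk: "n+1-k \<in> {1..n}" "n+1-k' \<in> {1..n}" using assms(3,4) by auto
  have "n + 1 - k = n + 1 - k'"
    using colorless_inj[OF assms(1,2) kk r] .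
  then show ?thesis using assms(3,4) by auto
qed

lemma sigma_inv:
  assumes "\<nu> \<in> P0 n" "n > 0" "k \<in> {1..n}" "sigma n \<nu> k = v"
  shows "inv (sigma n \<nu>) v = k"
proof -
  let ?x = "SOME x. sigma n \<nu> x = v"
  have sx: "sigma n \<nu> ?x = v" using assms(4) by (rule someI)
  have vr: "v \<in> {1..n}" using assms(4) sigma_val[OF assms(3)] rep_range[OF assms(2)] by metis
  have "?x \<in> {1..n}"
  proof (rule ccontr)
    assume "?x \<notin> {1..n}"
    have out: "\<And>x. x \<notin> {1..n} \<Longrightarrow> sigma n \<nu> x = x" unfolding sigma_def by auto
    then have "sigma n \<nu> ?x = ?x" using \<open>?x \<notin> {1..n}\<close> by blast
    then show False using sx vr \<open>?x \<notin> {1..n}\<close> by simp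
  qed
  then have "?x = k" using sigma_inj[OF assms(1,2) _ assms(3)] sx assms(4) by simp
  then show ?thesis unfolding inv_def by simp
qed

lemma mod_decomp: "x mod int n = y mod int n \<Longrightarrow> x = y + ((x - y) div int n) * int n"
proof -
  assume "x mod int n = y mod int n"
  then have "(x - y) mod int n = 0" by (simp add: mod_eq_dvd_iff)
  then show ?thesis using div_mult_mod_eq[of "x - y" "int n"] by simp
qed

theorem mainTheorem12:
  fixes n i :: nat and \<nu> \<mu> :: "nat list"
  assumes "n \<ge> 3"
    and "\<nu> \<in> P0 n" and "minimal n \<nu>"
    and "1 \<le> i" and "i \<le> n - 1"
    and "inv (sigma n \<nu>) i < inv (sigma n \<nu>) (i + 1)"
    and "\<mu> \<in> P0 n" and "minimal n \<mu>"
    and "sigma n \<mu> = transpose i (i + 1) \<circ> sigma n \<nu>"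
  shows "\<forall>j\<in>{1..n-1}. beta n \<mu> j = refl n (int i) (beta n \<nu> j)
           \<or> beta n \<mu> j = qadd (refl n (int i) (beta n \<nu> j)) (delta n)"
proof
  fix j assume j: "j \<in> {1..n-1}"
  have n0: "n > 0" and n2: "n \<ge> 2" using assms(1) by auto
  have iln: "i < n" using assms(5) n0 by simp
  have nuP: "is_partition \<nu>" using assms(2) unfolding P0_def by simp
  have muP: "is_partition \<mu>" using assms(7) unfolding P0_def by simp
  have j1: "1 \<le> j" "j + 1 \<le> n" using j n0 by auto
  have j1': "j \<in> {1..n - 1}" using j .
  have gen: "beta n \<kappa> j = (\<lambda>k. Gf n (aa \<kappa> j) k - Gf n (aa \<kappa> (j+1)) k)
       \<and> 1 \<le> aa \<kappa> j - aa \<kappa> (j+1) \<and> aa \<kappa> j - aa \<kappa> (j+1) \<le> int n - 1"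
    if kP: "is_partition \<kappa>" and km: "minimal n \<kappa>" for \<kappa>
  proof -
    have cn: "conj \<kappa> (j+1) \<le> conj \<kappa> j" using conj_mono[OF kP j1(1)] .
    have mn: "conj \<kappa> j < conj \<kappa> (j+1) + n - 1" using km j unfolding minimal_def by blast
    have mn': "conj \<kappa> j + 1 < conj \<kappa> (j+1) + n" using mn assms(1) by linarith
    have le: "aa \<kappa> (j+1) \<le> aa \<kappa> j" using cn unfolding aa_def by simp
    have "beta n \<kappa> j = (\<lambda>k. \<Sum>t\<in>{aa \<kappa> (j+1) .. aa \<kappa> j - 1}. alpha n t k)"
      unfolding beta_def aa_def by simp
    also have "\<dots> = (\<lambda>k. Gf n (aa \<kappa> j) k - Gf n (aa \<kappa> (j+1)) k)"
      using sum_alpha_G[OF n0 le] by simp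
    finally show ?thesis using cn mn' unfolding aa_def by simp
  qed
  obtain bnu: "beta n \<nu> j = (\<lambda>k. Gf n (aa \<nu> j) k - Gf n (aa \<nu> (j+1)) k)"
    and bnd1: "1 \<le> aa \<nu> j - aa \<nu> (j+1)" "aa \<nu> j - aa \<nu> (j+1) \<le> int n - 1"
    using gen[OF nuP assms(3)] by blast
  obtain bmu: "beta n \<mu> j = (\<lambda>k. Gf n (aa \<mu> j) k - Gf n (aa \<mu> (j+1)) k)"
    and bnd2: "1 \<le> aa \<mu> j - aa \<mu> (j+1)" "aa \<mu> j - aa \<mu> (j+1) \<le> int n - 1"
    using gen[OF muP assms(8)] by blast
  have res: "aa \<mu> m mod int n = sh n i (aa \<nu> m) mod int n" if m: "m \<in> {1..n}" for m
  proof -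
    have k: "n + 1 - m \<in> {1..n}" and km: "n + 1 - (n + 1 - m) = m" using m by auto
    have "sigma n \<mu> (n + 1 - m) = transpose i (i+1) (sigma n \<nu> (n + 1 - m))"
      using assms(9) by simp
    then have "rep n (aa \<mu> m) = transpose i (i+1) (rep n (aa \<nu> m))"
      unfolding sigma_val[OF k] km .
    also have "\<dots> = rep n (sh n i (aa \<nu> m))" using rep_sh[OF assms(1) assms(4) iln] by simp
    finally show ?thesis using rep_eq_mod[OF n0] by simp
  qed
  define P where "P = aa \<nu> (j+1)"
  define Q where "Q = aa \<nu> j"
  define P' where "P' = aa \<mu> (j+1)"
  define Q' where "Q' = aa \<mu> j"
  define u where "u = (P' - sh n i P) div int n"
  define v where "v = (Q' - sh n i Q) div int n"
  have Pd: "P' = sh n i P + u * int n"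
    unfolding u_def P_def P'_def by (rule mod_decomp, rule res) (use j1 in auto)
  have Qd: "Q' = sh n i Q + v * int n"
    unfolding v_def Q_def Q'_def by (rule mod_decomp, rule res) (use j1 in auto)
  have notbad: "\<not> (Ef n i Q = 1 \<and> Ef n i P = -1)"
  proof
    assume bad: "Ef n i Q = 1 \<and> Ef n i P = -1"
    then have "Q mod int n = int i mod int n" "P mod int n = (int i + 1) mod int n"
      using Ef_one[OF n0 iln, of Q] Ef_mone[OF n2 iln, of P] iln by auto
    then have rQ: "rep n Q = i" and rP: "rep n P = i + 1"
      using rep_eq_mod[OF n0, of Q "int i"] rep_eq_mod[OF n0, of P "int i + 1"]
        rep_int[of i n] rep_int[of "i+1" n] assms(4) iln by (auto simp: add.commute)
    have k1: "n + 1 - j \<in> {1..n}" "n - j \<in> {1..n}" using j1 by auto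
    have "sigma n \<nu> (n + 1 - j) = i" using sigma_val[OF k1(1)] rQ j1 unfolding Q_def by simp
    then have i1: "inv (sigma n \<nu>) i = n + 1 - j" by (rule sigma_inv[OF assms(2) n0 k1(1)])
    have "n + 1 - (n - j) = j + 1" using j1 by auto
    then have "sigma n \<nu> (n - j) = i + 1" using sigma_val[OF k1(2)] rP unfolding P_def by simp
    then have i2: "inv (sigma n \<nu>) (i + 1) = n - j" by (rule sigma_inv[OF assms(2) n0 k1(2)])
    show False using assms(6) i1 i2 j1 by simp
  qed
  define w where "w = v - u"
  have EQ: "Ef n i Q = 1 \<or> Ef n i Q = -1 \<or> Ef n i Q = 0" by (rule E_cases)
  have EP: "Ef n i P = 1 \<or> Ef n i P = -1 \<or> Ef n i P = 0" by (rule E_cases)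
  have diff: "Q' - P' = (Q - P) + Ef n i Q - Ef n i P + w * int n"
    unfolding Pd Qd w_def sh_def by (simp add: algebra_simps)
  have Eb: "Ef n i Q \<le> 1" "-1 \<le> Ef n i Q" "Ef n i P \<le> 1" "-1 \<le> Ef n i P"
    "Ef n i Q - Ef n i P \<le> 1" using EQ EP notbad by auto
  have n3i: "int n \<ge> 3" using assms(1) by simp
  have bnd1': "1 \<le> Q - P" "Q - P \<le> int n - 1" using bnd1 unfolding P_def Q_def by auto
  have bnd2': "1 \<le> Q' - P'" "Q' - P' \<le> int n - 1" using bnd2 unfolding P'_def Q'_def by auto
  have w0: "w \<ge> 0"
  proof (rule ccontr)
    assume "\<not> w \<ge> 0"
    then have "w * int n \<le> (-1) * int n" by (intro mult_right_mono) auto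
    then show False using diff bnd1' bnd2' Eb n3i by linarith
  qed
  have w1: "w \<le> 1"
  proof (rule ccontr)
    assume "\<not> w \<le> 1"
    then have "w * int n \<ge> 2 * int n" by (intro mult_right_mono) auto
    then show False using diff bnd1' bnd2' Eb n3i by linarith
  qed
  have bmu': "beta n \<mu> j = (\<lambda>k. Gf n (sh n i Q) k - Gf n (sh n i P) k + (if k < n then w else 0))"
    unfolding bmu Q'_def[symmetric] P'_def[symmetric] Pd Qd G_shift[OF n0] w_def by (auto simp: fun_eq_iff)
  have rnu: "refl n (int i) (beta n \<nu> j) = (\<lambda>k. Gf n (sh n i Q) k - Gf n (sh n i P) k)"
    unfolding bnu Q_def[symmetric] P_def[symmetric] by (rule refl_G[OF assms(1) iln])
  show "beta n \<mu> j = refl n (int i) (beta n \<nu> j)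
           \<or> beta n \<mu> j = qadd (refl n (int i) (beta n \<nu> j)) (delta n)"
  proof -
    have "w = 0 \<or> w = 1" using w0 w1 by auto
    then show ?thesis
    proof
      assume wz: "w = 0"
      have "beta n \<mu> j = refl n (int i) (beta n \<nu> j)" unfolding bmu' rnu wz by simp
      then show ?thesis by blast
    next
      assume wo: "w = 1"
      have "beta n \<mu> j = qadd (refl n (int i) (beta n \<nu> j)) (delta n)"
        unfolding bmu' rnu qadd_def delta_def wo by (simp add: fun_eq_iff)
      then show ?thesis by blast
    qed
  qed
qed

end
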